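(* Let $\nu>2$ and let $F_\nu$ be the CDF of the Student's $t$-distribution with $\nu$ degrees of freedom, location $0$ and scale $1$. For every $t>0$, $$\frac{1}{1-F_\nu(t)}\le\frac{(t^2+\nu)^{\nu/2}}{\kappa},\qquad \kappa=\frac{\Gamma\left(\frac{\nu+1}{2}\right)(\nu-1)}{2\sqrt{\pi}\,\Gamma\left(\frac{\nu}{2}\right)}.$$ *)

theory Defs
  imports "HOL-Probability.Probability"
begin

definition student_t_density :: "real \<Rightarrow> real \<Rightarrow> real" where
  "student_t_density \<nu> x =
     Gamma ((\<nu> + 1) / 2) / (sqrt (\<nu> * pi) * Gamma (\<nu> / 2))
     * (1 + x\<^sup>2 / \<nu>) powr (- (\<nu> + 1) / 2)"

definition student_t_CDF :: "real \<Rightarrow> real \<Rightarrow> real" where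
  "student_t_CDF \<nu> t = (LINT x:{..t}|lborel. student_t_density \<nu> x)"

end

theory Submission
  imports Defs
begin


lemma ptwise:
  fixes v y :: real assumes v: "v > 0" and y: "y > 0"
  shows "abs (2 * v * y / (v + y\<^sup>2)\<^sup>2) * ((y\<^sup>2 / (v + y\<^sup>2)) powr (1/2 - 1) * (1 - y\<^sup>2 / (v + y\<^sup>2)) powr (v/2 - 1))
     = 2 / sqrt v * (1 + y\<^sup>2 / v) powr (- (v + 1) / 2)"
proof -
  define w where "w = v + y\<^sup>2"
  have w: "w > 0" using v y unfolding w_def by (simp add: add_pos_nonneg)
  have e1: "1 - y\<^sup>2 / (v + y\<^sup>2) = v / w" using w by (simp add: w_def field_simps)
  have e2: "1 + y\<^sup>2 / v = w / v" using v by (simp add: w_def field_simps)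
  have f1: "abs (2 * v * y / (v + y\<^sup>2)\<^sup>2) = exp (ln 2 + ln v + ln y - ln w - ln w)"
  proof -
    have "exp (ln 2 + ln v + ln y - ln w - ln w) = exp (ln 2) * exp (ln v) * exp (ln y) / exp (ln w) / exp (ln w)"
      by (simp only: exp_add exp_diff)
    also have "\<dots> = 2 * v * y / w\<^sup>2" using v y w by (simp add: power2_eq_square)
    finally show ?thesis using v y w by (simp add: w_def[symmetric])
  qed
  have f2: "(y\<^sup>2 / (v + y\<^sup>2)) powr (1/2 - 1) = exp ((-1/2) * (2 * ln y - ln w))"
    using v y w by (simp add: powr_def ln_div ln_realpow w_def[symmetric])
  have f3: "(1 - y\<^sup>2 / (v + y\<^sup>2)) powr (v/2 - 1) = exp ((v/2 - 1) * (ln v - ln w))"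
    using v y w by (simp add: e1 powr_def ln_div)
  have sq: "sqrt v = exp (ln v / 2)" using v by (simp add: powr_half_sqrt[symmetric] powr_def)
  have f4: "2 / sqrt v * (1 + y\<^sup>2 / v) powr (- (v + 1) / 2) = exp (ln 2 - ln v / 2 + (- (v + 1) / 2) * (ln w - ln v))"
    using v y w by (simp add: e2 powr_def ln_div exp_add exp_diff sq)
  show ?thesis unfolding f1 f2 f3 f4 exp_add[symmetric]
    by (rule arg_cong[where f=exp]) (simp add: field_simps)
qed

lemma deriv_g:
  fixes v u :: real assumes pos: "v + u\<^sup>2 > 0"
  shows "((\<lambda>u. u\<^sup>2 / (v + u\<^sup>2)) has_field_derivative (2 * v * u / (v + u\<^sup>2)\<^sup>2)) (at u within S)"
proof -
  have d1: "((\<lambda>u. u\<^sup>2) has_field_derivative (2 * u)) (at u within S)"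
    using DERIV_pow[of 2 u] by (simp add: has_field_derivative_at_within)
  have d2: "((\<lambda>u. v + u\<^sup>2) has_field_derivative (2 * u)) (at u within S)"
    using DERIV_add[OF DERIV_const d1] by simp
  have d: "((\<lambda>u. u\<^sup>2 / (v + u\<^sup>2)) has_field_derivative
      ((2 * u) * (v + u\<^sup>2) - u\<^sup>2 * (2 * u)) / ((v + u\<^sup>2) * (v + u\<^sup>2))) (at u within S)"
    by (rule DERIV_divide[OF d1 d2]) (use pos in simp)
  have e: "((2 * u) * (v + u\<^sup>2) - u\<^sup>2 * (2 * u)) / ((v + u\<^sup>2) * (v + u\<^sup>2)) = 2 * v * u / (v + u\<^sup>2)\<^sup>2"
    by (simp add: power2_eq_square algebra_simps)
  show ?thesis using d unfolding e .
qed

lemma half_int: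
  fixes v :: real assumes v: "v > 0"
  shows "(\<lambda>x. (1 + x\<^sup>2 / v) powr (- (v + 1) / 2)) absolutely_integrable_on {0<..} \<and>
     integral {0<..} (\<lambda>x. (1 + x\<^sup>2 / v) powr (- (v + 1) / 2)) = sqrt v / 2 * Beta (1/2) (v/2)"
proof -
  define h where "h = (\<lambda>x::real. (1 + x\<^sup>2 / v) powr (- (v + 1) / 2))"
  define g where "g = (\<lambda>u::real. u\<^sup>2 / (v + u\<^sup>2))"
  define g' where "g' = (\<lambda>u::real. 2 * v * u / (v + u\<^sup>2)\<^sup>2)"
  define f where "f = (\<lambda>s::real. s powr (1/2 - 1) * (1 - s) powr (v/2 - 1))"
  have pos: "v + u\<^sup>2 > 0" for u using v by (simp add: add_pos_nonneg)
  have img: "g ` {0<..} = {0<..<1}"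
  proof
    show "g ` {0<..} \<subseteq> {0<..<1}" using pos v by (auto simp: g_def field_simps)
  next
    show "{0<..<1} \<subseteq> g ` {0<..}"
    proof
      fix s :: real assume s: "s \<in> {0<..<1}"
      define u where "u = sqrt (v * s / (1 - s))"
      have u2: "u\<^sup>2 = v * s / (1 - s)" using s v unfolding u_def by (simp add: real_sqrt_pow2)
      have "u > 0" using s v unfolding u_def by simp
      moreover have "g u = s" unfolding g_def u2 using s v by (simp add: field_simps)
      ultimately show "s \<in> g ` {0<..}" by force
    qed
  qed
  have inj: "inj_on g {0<..}"
  proof (rule inj_onI)
    fix a b :: real assume a: "a \<in> {0<..}" and b: "b \<in> {0<..}" and e: "g a = g b"
    from e have "a\<^sup>2 * (v + b\<^sup>2) = b\<^sup>2 * (v + a\<^sup>2)" using pos[of a] pos[of b] unfolding g_def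
      by (simp add: frac_eq_eq)
    hence "v * a\<^sup>2 = v * b\<^sup>2" by (simp add: algebra_simps)
    hence "a\<^sup>2 = b\<^sup>2" using v by simp
    thus "a = b" using a b by (simp add: power2_eq_iff_nonneg)
  qed
  have der: "(g has_field_derivative g' u) (at u within {0<..})" if "u \<in> {0<..}" for u
    unfolding g_def g'_def by (rule deriv_g[OF pos])
  have B: "f absolutely_integrable_on {0<..<1} \<and> integral {0<..<1} f = Beta (1/2) (v/2)"
  proof -
    have hi: "(f has_integral Beta (1/2) (v/2)) {0<..<1}"
      using has_integral_Beta_real[of "1/2" "v/2"] v unfolding f_def by (simp add: has_integral_Icc_iff_Ioo)
    hence "f integrable_on {0<..<1}" by blast
    hence "f absolutely_integrable_on {0<..<1}"
      by (subst absolutely_integrable_on_iff_nonneg) (auto simp: f_def)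
    thus ?thesis using hi by (simp add: integral_unique)
  qed
  have cv: "(\<lambda>u. \<bar>g' u\<bar> * f (g u)) absolutely_integrable_on {0<..} \<and>
      integral {0<..} (\<lambda>u. \<bar>g' u\<bar> * f (g u)) = Beta (1/2) (v/2)"
    using has_absolute_integral_change_of_variables_1'[of "{0<..}" g g' f "Beta (1/2) (v/2)", OF _ der inj] B img
    by auto
  have eq: "\<bar>g' u\<bar> * f (g u) = 2 / sqrt v * h u" if "u \<in> {0<..}" for u
    using ptwise[OF v, of u] that unfolding g_def g'_def f_def h_def by simp
  have c1: "(\<lambda>u. 2 / sqrt v * h u) absolutely_integrable_on {0<..}"
  proof -
    have "set_integrable lebesgue {0<..} (\<lambda>u. \<bar>g' u\<bar> * f (g u)) = set_integrable lebesgue {0<..} (\<lambda>u. 2 / sqrt v * h u)"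
      by (rule set_integrable_cong) (auto simp: eq)
    with cv show ?thesis by simp
  qed
  have c2: "integral {0<..} (\<lambda>u. 2 / sqrt v * h u) = Beta (1/2) (v/2)"
  proof -
    have "integral {0<..} (\<lambda>u. \<bar>g' u\<bar> * f (g u)) = integral {0<..} (\<lambda>u. 2 / sqrt v * h u)"
      by (rule integral_cong) (rule eq)
    with cv show ?thesis by simp
  qed
  have hh: "h = (\<lambda>u. (sqrt v / 2) *\<^sub>R (2 / sqrt v * h u))"
    by (rule ext) (use v in simp)
  have "(\<lambda>u. (sqrt v / 2) *\<^sub>R (2 / sqrt v * h u)) absolutely_integrable_on {0<..}"
    by (rule absolutely_integrable_scaleR_left) (rule c1)
  hence "h absolutely_integrable_on {0<..}" using hh by simp
  moreover have "integral {0<..} h = sqrt v / 2 * Beta (1/2) (v/2)"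
  proof -
    have "integral {0<..} h = integral {0<..} (\<lambda>u. (sqrt v / 2) *\<^sub>R (2 / sqrt v * h u))"
      by (rule arg_cong[OF hh])
    also have "\<dots> = (sqrt v / 2) *\<^sub>R integral {0<..} (\<lambda>u. 2 / sqrt v * h u)"
      by (rule integral_cmul)
    finally show ?thesis unfolding real_scaleR_def c2 .
  qed
  ultimately show ?thesis unfolding h_def by blast
qed

lemma neg_int:
  fixes v :: real assumes v: "v > 0"
  shows "(\<lambda>x. (1 + x\<^sup>2 / v) powr (- (v + 1) / 2)) absolutely_integrable_on {..<0} \<and>
     integral {..<0} (\<lambda>x. (1 + x\<^sup>2 / v) powr (- (v + 1) / 2)) = sqrt v / 2 * Beta (1/2) (v/2)"
proof -
  define h where "h = (\<lambda>x::real. (1 + x\<^sup>2 / v) powr (- (v + 1) / 2))"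
  have img: "uminus ` {..<0} = ({0<..} :: real set)"
    by (auto simp: image_iff intro!: bexI[of _ "- x" for x])
  have der: "(uminus has_field_derivative (-1)) (at u within {..<0})" for u :: real
    by (auto intro!: derivative_eq_intros)
  have H: "h absolutely_integrable_on {0<..} \<and> integral {0<..} h = sqrt v / 2 * Beta (1/2) (v/2)"
    using half_int[OF v] unfolding h_def .
  have "(\<lambda>u. \<bar>-1\<bar> * h (- u)) absolutely_integrable_on {..<0} \<and>
      integral {..<0} (\<lambda>u. \<bar>-1\<bar> * h (- u)) = sqrt v / 2 * Beta (1/2) (v/2)"
    by (rule has_absolute_integral_change_of_variables_1'[OF _ der, THEN iffD2]) (auto simp: img H)
  moreover have "(\<lambda>u. \<bar>-1\<bar> * h (- u)) = h" by (auto simp: h_def)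
  ultimately show ?thesis unfolding h_def by simp
qed

lemma abs_to_lborel:
  fixes f :: "real \<Rightarrow> real"
  assumes "f absolutely_integrable_on S" "S \<in> sets borel" "continuous_on UNIV f"
  shows "set_integrable lborel S f"
proof -
  have m: "(\<lambda>x. indicator S x *\<^sub>R f x) \<in> borel_measurable lborel"
    using assms(2) borel_measurable_continuous_onI[OF assms(3)] by measurable
  show ?thesis using assms(1) unfolding set_integrable_def
    using integrable_completion[OF m] by simp
qed



lemma tail_int:
  fixes v t :: real assumes v: "v > 0" and t: "t > 0"
  shows "(\<lambda>x. v powr ((v+1)/2) * x * (v + x\<^sup>2) powr (-(v+2)/2)) absolutely_integrable_on {t<..} \<and>
    integral {t<..} (\<lambda>x. v powr ((v+1)/2) * x * (v + x\<^sup>2) powr (-(v+2)/2))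
      = v powr ((v+1)/2) / v * (v + t\<^sup>2) powr (-v/2)"
proof -
  define k where "k = (\<lambda>x. v powr ((v+1)/2) * x * (v + x\<^sup>2) powr (-(v+2)/2))"
  define F where "F = (\<lambda>x. - (v powr ((v+1)/2) / v) * (v + x\<^sup>2) powr (-v/2))"
  have pos: "v + x\<^sup>2 > 0" for x using v by (simp add: add_pos_nonneg)
  have pw: "(v + x\<^sup>2) powr (-v/2) / (v + x\<^sup>2) = (v + x\<^sup>2) powr (-(v+2)/2)" for x
  proof -
    have "(v + x\<^sup>2) powr (-(v+2)/2) = (v + x\<^sup>2) powr (-v/2 + -1)"
      by (rule arg_cong[where f="\<lambda>e. (v + x\<^sup>2) powr e"]) (simp add: field_simps)
    also have "\<dots> = (v + x\<^sup>2) powr (-v/2) * (v + x\<^sup>2) powr (-1)" by (rule powr_add)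
    also have "\<dots> = (v + x\<^sup>2) powr (-v/2) / (v + x\<^sup>2)" using pos[of x] by (simp add: powr_neg_one)
    finally show ?thesis by simp
  qed
  have D: "DERIV F x :> k x" for x
  proof -
    have d: "DERIV F x :> - (v powr ((v+1)/2) / v) * ((-v/2) * (v + x\<^sup>2) powr (-v/2) / (v + x\<^sup>2) * (2 * x))"
      unfolding F_def using pos[of x]
      by (auto intro!: derivative_eq_intros simp: powr_diff)
    have e: "- (v powr ((v+1)/2) / v) * ((-v/2) * (v + x\<^sup>2) powr (-v/2) / (v + x\<^sup>2) * (2 * x)) = k x"
    proof -
      have "- (v powr ((v+1)/2) / v) * ((-v/2) * (v + x\<^sup>2) powr (-v/2) / (v + x\<^sup>2) * (2 * x))
          = v powr ((v+1)/2) * x * ((v + x\<^sup>2) powr (-v/2) / (v + x\<^sup>2))"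
      proof -
        have gen: "- (P / v) * ((-v/2) * Q / W * (2 * x)) = P * x * (Q / W)" for P Q W :: real
          using v by (simp add: field_simps)
        show ?thesis by (rule gen)
      qed
      thus ?thesis unfolding k_def pw .
    qed
    show ?thesis using d e by simp
  qed
  have C: "isCont k x" for x unfolding k_def using pos[of x] by (auto intro!: continuous_intros)
  have lim0: "((\<lambda>x. (v + x\<^sup>2) powr (-v/2)) \<longlongrightarrow> 0) at_top"
  proof (rule tendsto_neg_powr)
    show "- v / 2 < 0" using v by simp
    show "filterlim (\<lambda>x::real. v + x\<^sup>2) at_top at_top"
    proof (rule filterlim_tendsto_add_at_top[OF tendsto_const])
      show "filterlim (\<lambda>x::real. x\<^sup>2) at_top at_top"
        by (rule filterlim_pow_at_top) (auto simp: filterlim_ident)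
    qed
  qed
  have limB: "((F \<circ> real_of_ereal) \<longlongrightarrow> 0) (at_left \<infinity>)"
    unfolding ereal_tendsto_simps1 F_def by (rule tendsto_mult_right_zero[OF lim0])
  have contF: "isCont F x" for x using D by (rule DERIV_isCont)
  have limA: "((F \<circ> real_of_ereal) \<longlongrightarrow> F t) (at_right (ereal t))"
    unfolding ereal_tendsto_simps1 using contF[of t]
    by (simp add: isCont_def filterlim_at_split)
  have knn: "AE x in lborel. ereal t < ereal x \<longrightarrow> ereal x < \<infinity> \<longrightarrow> 0 \<le> k x"
    using t by (auto simp: k_def)
  note ftc = interval_integral_FTC_nonneg[of "ereal t" \<infinity> F k, OF _ D C knn limA limB]
  have si: "set_integrable lborel {t<..} k" using ftc(1) by simp
  have iv: "(LINT x:{t<..}|lborel. k x) = - F t" using ftc(2) by (simp add: interval_integral_to_infinity_eq)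
  have "k absolutely_integrable_on {t<..}"
    using set_borel_integral_eq_integral(1)[OF si] t
    by (subst absolutely_integrable_on_iff_nonneg) (auto simp: k_def)
  moreover have "integral {t<..} k = - F t" using set_borel_integral_eq_integral(2)[OF si] iv by simp
  ultimately show ?thesis unfolding k_def F_def by simp
qed


lemma k_le_h:
  fixes v x :: real assumes v: "v > 0" and x: "x > 0"
  shows "v powr ((v+1)/2) * x * (v + x\<^sup>2) powr (-(v+2)/2) \<le> (1 + x\<^sup>2 / v) powr (- (v + 1) / 2)"
proof -
  have pos: "v + x\<^sup>2 > 0" using v by (simp add: add_pos_nonneg)
  have "(1 + x\<^sup>2 / v) powr (- (v + 1) / 2) = ((v + x\<^sup>2) / v) powr (- (v + 1) / 2)"
    using v by (simp add: field_simps)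
  also have "\<dots> = v powr ((v+1)/2) * (v + x\<^sup>2) powr (- (v + 1) / 2)"
  proof -
    have m: "- (v + 1) / 2 = - ((v+1)/2)" by (simp only: minus_divide_left)
    show ?thesis using v pos unfolding m by (simp add: powr_divide powr_minus divide_simps)
  qed
  also have "(v + x\<^sup>2) powr (- (v + 1) / 2) = (v + x\<^sup>2) powr (1/2) * (v + x\<^sup>2) powr (-(v+2)/2)"
  proof -
    have "- (v + 1) / 2 = 1/2 + (-(v+2)/2)" by (simp add: field_simps)
    thus ?thesis by (simp only: powr_add)
  qed
  finally have e: "(1 + x\<^sup>2 / v) powr (- (v + 1) / 2) = v powr ((v+1)/2) * (v + x\<^sup>2) powr (1/2) * (v + x\<^sup>2) powr (-(v+2)/2)"
    by simp
  have "x \<le> (v + x\<^sup>2) powr (1/2)" using pos v x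
    by (simp add: powr_half_sqrt real_le_rsqrt)
  hence "v powr ((v+1)/2) * x \<le> v powr ((v+1)/2) * (v + x\<^sup>2) powr (1/2)"
    by (simp add: mult_left_mono)
  thus ?thesis unfolding e by (simp add: mult_right_mono)
qed

lemma nu_ineq:
  fixes v :: real assumes v: "v > 2"
  shows "(v - 1) / 2 \<le> v powr (v/2 - 1)"
proof (cases "v \<le> 3")
  case True
  have "1 \<le> v powr (v/2 - 1)" using v by (simp add: ge_one_powr_ge_zero)
  thus ?thesis using True by simp
next
  case False
  show ?thesis
  proof (cases "v \<le> 4")
    case True
    have "v powr (1/2) \<le> v powr (v/2 - 1)" using v False by (intro powr_mono) auto
    moreover have "3/2 \<le> sqrt v" by (rule real_le_rsqrt) (use False in \<open>simp add: power2_eq_square\<close>)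
    hence "3/2 \<le> v powr (1/2)" using v by (simp add: powr_half_sqrt)
    ultimately show ?thesis using True by simp
  next
    case f2: False
    have "v powr 1 \<le> v powr (v/2 - 1)" using v f2 by (intro powr_mono) auto
    thus ?thesis using v by simp
  qed
qed





theorem corollary3:
  fixes \<nu> t :: real
  assumes "\<nu> > 2" and "t > 0"
  shows "1 / (1 - student_t_CDF \<nu> t)
           \<le> (t\<^sup>2 + \<nu>) powr (\<nu> / 2)
              / (Gamma ((\<nu> + 1) / 2) * (\<nu> - 1) / (2 * sqrt pi * Gamma (\<nu> / 2)))"
proof -
  have v0: "\<nu> > 0" using assms(1) by simp
  define h where "h = (\<lambda>x::real. (1 + x\<^sup>2 / \<nu>) powr (- (\<nu> + 1) / 2))"
  define c where "c = Gamma ((\<nu> + 1) / 2) / (sqrt (\<nu> * pi) * Gamma (\<nu> / 2))"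
  define I0 where "I0 = sqrt \<nu> / 2 * Beta (1/2) (\<nu>/2)"
  define T where "T = integral {t<..} h"
  have dens: "student_t_density \<nu> x = c * h x" for x unfolding student_t_density_def c_def h_def ..
  have nz: "1 + x\<^sup>2 / \<nu> \<noteq> 0" for x
  proof -
    have "x\<^sup>2 / \<nu> \<ge> 0" using v0 by simp
    thus ?thesis by linarith
  qed
  have contf: "continuous_on UNIV h" unfolding h_def
    by (intro continuous_intros) (use nz v0 in auto)
  have H0: "h absolutely_integrable_on {0<..}" "integral {0<..} h = I0"
    using half_int[OF v0] unfolding h_def I0_def by auto
  have Hn: "h absolutely_integrable_on {..<0}" "integral {..<0} h = I0"
    using neg_int[OF v0] unfolding h_def I0_def by auto
  have Hc: "h absolutely_integrable_on {0..t}"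
    by (rule absolutely_integrable_continuous_real) (rule continuous_on_subset[OF contf], auto)
  have negl0: "negligible {x \<in> {0..} - {0<..}. h x \<noteq> 0}" "negligible {x \<in> {0<..} - {0..}. h x \<noteq> 0}"
    by (rule negligible_subset[of "{0}"], auto)+
  have Hz: "h absolutely_integrable_on {0..}"
    using H0(1) absolutely_integrable_spike_set_eq[OF negl0] by simp
  have Hz2: "integral {0..} h = I0"
    using H0(2) integral_spike_set[OF negl0] by simp
  have lebt: "{t<..} \<in> sets lebesgue" by (rule sets_completionI_sets) simp
  have Ht: "h absolutely_integrable_on {t<..}"
    by (rule set_integrable_subset[OF H0(1) lebt]) (use assms(2) in auto)
  have E1: "integral {0..} h = integral {0..t} h + T"
  proof -
    have U: "{0..} = {0..t} \<union> {t<..}" using assms(2) by auto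
    have "{0..t} \<inter> {t<..} = {}" by auto
    moreover have "integral ({0..t} \<union> {t<..}) h = integral {0..t} h + integral {t<..} h"
      by (rule integral_Un) (use \<open>{0..t} \<inter> {t<..} = {}\<close> in \<open>auto simp: set_lebesgue_integral_eq_integral(1)[OF Hc]
        set_lebesgue_integral_eq_integral(1)[OF Ht]\<close>)
    ultimately show ?thesis unfolding T_def U by simp
  qed
  have un: "{..t} = {..<0} \<union> {0..t}" using assms(2) by auto
  have Hall: "h absolutely_integrable_on {..t}"
    unfolding un by (rule absolutely_integrable_Un[OF Hn(1) Hc])
  have E2: "integral {..t} h = integral {..<0} h + integral {0..t} h"
    unfolding un
  proof (rule integral_Un)
    have "{..<0} \<inter> {0..t} = ({} :: real set)" by auto
    thus "negligible ({..<0} \<inter> {0..t})" by simp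
  qed (auto simp: set_lebesgue_integral_eq_integral(1)[OF Hc]
        set_lebesgue_integral_eq_integral(1)[OF Hn(1)])
  have int_t: "integral {..t} h = 2 * I0 - T" using E1 E2 Hz2 Hn(2) by simp
  have Hall_c: "(\<lambda>x. c * h x) absolutely_integrable_on {..t}"
    using Hall by (rule set_integrable_mult_right)
  have si: "set_integrable lborel {..t} (\<lambda>x. c * h x)"
    by (rule abs_to_lborel[OF Hall_c]) (auto intro!: continuous_intros contf)
  have cdf: "student_t_CDF \<nu> t = c * (2 * I0 - T)"
    unfolding student_t_CDF_def dens set_borel_integral_eq_integral(2)[OF si]
    by (simp add: int_t)
  have G1: "Gamma ((\<nu> + 1) / 2) > 0" using v0 by (intro Gamma_real_pos) simp
  have G2: "Gamma (\<nu> / 2) > 0" using v0 by (intro Gamma_real_pos) simp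
  have cI: "c * (2 * I0) = 1"
  proof -
    have e: "1/2 + \<nu>/2 = (\<nu> + 1) / 2" by simp
    have g1: "Gamma ((1 + \<nu>) / 2) \<noteq> 0" using G1 by (simp add: add.commute)
    have g2: "Gamma (\<nu> / 2) \<noteq> 0" using G2 by simp
    show ?thesis unfolding c_def I0_def Beta_def e using v0 g1 g2
      by (simp add: Gamma_one_half_real real_sqrt_mult field_simps)
  qed
  have oneF: "1 - student_t_CDF \<nu> t = c * T" using cdf cI by (simp add: algebra_simps)
  define L where "L = \<nu> powr ((\<nu>+1)/2) / \<nu> * (\<nu> + t\<^sup>2) powr (-\<nu>/2)"
  note TI = tail_int[OF v0 assms(2)]
  have Tge: "L \<le> T"
  proof -
    have kint: "(\<lambda>x. \<nu> powr ((\<nu>+1)/2) * x * (\<nu> + x\<^sup>2) powr (-(\<nu>+2)/2)) integrable_on {t<..}"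
      using TI by (intro set_lebesgue_integral_eq_integral(1)) blast
    have hint: "h integrable_on {t<..}" by (rule set_lebesgue_integral_eq_integral(1)[OF Ht])
    have "integral {t<..} (\<lambda>x. \<nu> powr ((\<nu>+1)/2) * x * (\<nu> + x\<^sup>2) powr (-(\<nu>+2)/2)) \<le> integral {t<..} h"
    proof (rule integral_le[OF kint hint])
      fix x assume "x \<in> {t<..}"
      hence "x > 0" using assms(2) by simp
      thus "\<nu> powr ((\<nu>+1)/2) * x * (\<nu> + x\<^sup>2) powr (-(\<nu>+2)/2) \<le> h x"
        unfolding h_def by (rule k_le_h[OF v0])
    qed
    moreover have "integral {t<..} (\<lambda>x. \<nu> powr ((\<nu>+1)/2) * x * (\<nu> + x\<^sup>2) powr (-(\<nu>+2)/2)) = L"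
      using TI unfolding L_def by blast
    ultimately show ?thesis unfolding T_def by simp
  qed
  have pos: "\<nu> + t\<^sup>2 > 0" using v0 by (simp add: add_pos_nonneg)
  have Lpos: "L > 0" unfolding L_def using v0 pos by simp
  have cpos: "c > 0" unfolding c_def using G1 G2 v0 by simp
  have cT: "c * L \<le> c * T" using Tge cpos by simp
  have "1 / (1 - student_t_CDF \<nu> t) \<le> 1 / (c * L)" unfolding oneF
    by (rule divide_left_mono) (use cT cpos Lpos in auto)
  also have "1 / (c * L) = (t\<^sup>2 + \<nu>) powr (\<nu> / 2) / (c * (\<nu> powr ((\<nu>+1)/2) / \<nu>))"
  proof -
    have m: "-\<nu>/2 = - (\<nu>/2)" by (simp only: minus_divide_left)
    have wm: "(\<nu> + t\<^sup>2) powr (-\<nu>/2) = 1 / (t\<^sup>2 + \<nu>) powr (\<nu>/2)"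
      unfolding m by (simp add: powr_minus_divide add.commute)
    have W: "(t\<^sup>2 + \<nu>) powr (\<nu>/2) \<noteq> 0" using pos by (simp add: add.commute)
    have gen: "W \<noteq> 0 \<Longrightarrow> 1 / (C * (B * (1 / W))) = W / (C * B)" for W C B :: real
      by (simp add: field_simps)
    show ?thesis unfolding L_def wm by (rule gen[OF W])
  qed
  also have "\<dots> \<le> (t\<^sup>2 + \<nu>) powr (\<nu> / 2)
              / (Gamma ((\<nu> + 1) / 2) * (\<nu> - 1) / (2 * sqrt pi * Gamma (\<nu> / 2)))"
  proof (rule divide_left_mono)
    define K where "K = Gamma ((\<nu> + 1) / 2) / (sqrt pi * Gamma (\<nu> / 2))"
    have Kpos: "K > 0" unfolding K_def using G1 G2 by simp
    have p: "\<nu> powr ((\<nu>+1)/2) / \<nu> / sqrt \<nu> = \<nu> powr (\<nu>/2 - 1)"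
    proof -
      have "\<nu> powr (1 + 1/2) = \<nu> * sqrt \<nu>"
        using v0 by (simp only: powr_add) (simp add: powr_half_sqrt)
      hence "\<nu> * sqrt \<nu> = \<nu> powr (1 + 1/2)" by simp
      hence "\<nu> powr ((\<nu>+1)/2) / \<nu> / sqrt \<nu> = \<nu> powr ((\<nu>+1)/2) / \<nu> powr (1 + 1/2)"
        by (simp add: divide_divide_eq_left)
      also have "\<dots> = \<nu> powr ((\<nu>+1)/2 - (1 + 1/2))" using v0 by (simp add: powr_diff)
      also have "(\<nu>+1)/2 - (1 + 1/2) = \<nu>/2 - 1" by (simp add: field_simps)
      finally show ?thesis .
    qed
    have sp: "sqrt pi > 0" by simp
    have g2n: "Gamma (\<nu> / 2) \<noteq> 0" using G2 by simp
    have sv: "sqrt \<nu> > 0" using v0 by simp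
    have gen1: "a / (b * c * d) * (e / f) = a / (c * d) * (e / f / b)" if "b \<noteq> 0" "c \<noteq> 0" "d \<noteq> 0" "f \<noteq> 0"
      for a b c d e f :: real using that by (simp add: field_simps)
    have e1: "c * (\<nu> powr ((\<nu>+1)/2) / \<nu>) = K * \<nu> powr (\<nu>/2 - 1)"
      unfolding c_def K_def p[symmetric] real_sqrt_mult
      by (rule gen1) (use sv sp g2n v0 in auto)
    have gen2: "a * b / (2 * c * d) = a / (c * d) * (b / 2)" for a b c d :: real
      by (simp add: field_simps)
    have e2: "Gamma ((\<nu> + 1) / 2) * (\<nu> - 1) / (2 * sqrt pi * Gamma (\<nu> / 2)) = K * ((\<nu> - 1) / 2)"
      unfolding K_def by (rule gen2)
    show "Gamma ((\<nu> + 1) / 2) * (\<nu> - 1) / (2 * sqrt pi * Gamma (\<nu> / 2)) \<le> c * (\<nu> powr ((\<nu>+1)/2) / \<nu>)"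
      unfolding e1 e2 using nu_ineq[OF assms(1)] Kpos by (simp add: mult_left_mono)
    show "0 \<le> (t\<^sup>2 + \<nu>) powr (\<nu> / 2)" by simp
    show "0 < c * (\<nu> powr ((\<nu>+1)/2) / \<nu>) * (Gamma ((\<nu> + 1) / 2) * (\<nu> - 1) / (2 * sqrt pi * Gamma (\<nu> / 2)))"
      by (intro mult_pos_pos divide_pos_pos) (use G1 G2 assms(1) cpos v0 in auto)
  qed
  finally show ?thesis .
qed
end
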